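(* Let $\ell\ge 2$, $N\ge 1$ and $D\ge 0$ be integers and let $T=4D\lceil\log_\ell N\rceil+1$. There exists a $T$-$(T,N,D)$-tropical protocol within maximum delay $\ell$.
   Context: Tropical arithmetic on $\mathbb{R}\cup\{\infty\}$: $x\oplus y=\min(x,y)$, $x\odot y=x+y$, with $x\oplus\infty=x$ and $x\odot\infty=\infty$; for a matrix $S$ and vector $\mathbf{x}$, $(S\odot\mathbf{x})_t=\min_j(S_{tj}+x_j)$. An $R$-$(T,N,D)$-tropical protocol consists of $R$ functions $\mathcal{S}^{(1)},\dots,\mathcal{S}^{(R)}$: $S^{(1)}=\mathcal{S}^{(1)}()$ is a fixed matrix, and for $r\ge 2$, $S^{(r)}=\mathcal{S}^{(r)}$ applied to the results $\bigl(S^{(1)};\dots;S^{(r-1)}\bigr)\odot\mathbf{x}$ of all previous rounds (vertical stacking); each $S^{(r)}$ has $N$ columns, entries in $\{0\}\cup\mathbb{N}\cup\{\infty\}$, and a number of rows that may depend on previous results, the total number of rows being at most $T$ for every $\mathbf{x}$; and the final result $\bigl(S^{(1)};\dots;S^{(R)}\bigr)\odot\mathbf{x}$ determines $\mathbf{x}$ uniquely among all $\mathbf{x}\in(\{0\}\cup\mathbb{N}\cup\{\infty\})^N$ with at most $D$ finite entries. It is within maximum delay $\ell$ if all schedule matrices use only entries in $\{0,1,\dots,\ell,\infty\}$. *)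

theory Defs
  imports Complex_Main "HOL-Library.Extended_Nat"
begin

text \<open>Tropical (min,+) arithmetic on enat = {0} \<union> \<nat> \<union> {\<infinity>}.
  A vector is an enat list of length N; a matrix is a list of rows (enat lists).\<close>

definition trop_row :: "enat list \<Rightarrow> enat list \<Rightarrow> enat" where
  "trop_row row x = (INF j\<in>{..<length x}. row ! j + x ! j)"

definition trop_mult :: "enat list list \<Rightarrow> enat list \<Rightarrow> enat list" where
  "trop_mult S x = map (\<lambda>row. trop_row row x) S"

text \<open>A protocol: P r gives the schedule matrix of round r+1 (r = 0,1,...) as a function
  of the stacked results of all previous rounds (for r = 0 the argument is [], so
  the first matrix is fixed).  run P r x = (S1;...;Sr) \<odot> x.\<close>

fun trop_run :: "(nat \<Rightarrow> enat list \<Rightarrow> enat list list) \<Rightarrow> nat \<Rightarrow> enat list \<Rightarrow> enat list" where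
  "trop_run P 0 x = []"
| "trop_run P (Suc r) x = trop_run P r x @ trop_mult (P r (trop_run P r x)) x"

definition num_finite :: "enat list \<Rightarrow> nat" where
  "num_finite x = card {i. i < length x \<and> x ! i \<noteq> \<infinity>}"

definition tropical_protocol ::
  "nat \<Rightarrow> nat \<Rightarrow> nat \<Rightarrow> nat \<Rightarrow> (nat \<Rightarrow> enat list \<Rightarrow> enat list list) \<Rightarrow> bool" where
  "tropical_protocol R T N D P \<longleftrightarrow>
     (\<forall>x. length x = N \<longrightarrow>
        (\<forall>r<R. \<forall>row\<in>set (P r (trop_run P r x)). length row = N)
        \<and> length (trop_run P R x) \<le> T)
   \<and> (\<forall>x y. length x = N \<longrightarrow> length y = N \<longrightarrow> num_finite x \<le> D \<longrightarrow> num_finite y \<le> D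
        \<longrightarrow> trop_run P R x = trop_run P R y \<longrightarrow> x = y)"

definition within_delay :: "nat \<Rightarrow> nat \<Rightarrow> nat \<Rightarrow> (nat \<Rightarrow> enat list \<Rightarrow> enat list list) \<Rightarrow> bool" where
  "within_delay R N l P \<longleftrightarrow>
     (\<forall>x. length x = N \<longrightarrow> (\<forall>r<R. \<forall>row\<in>set (P r (trop_run P r x)). \<forall>e\<in>set row.
         e = \<infinity> \<or> e \<le> enat l))"

end

theory Submission
  imports Defs
begin

datatype 'a qt = Ret 'a | Ask "(nat set \<times> nat) list" "enat \<Rightarrow> 'a qt"

primrec bindq :: "'a qt \<Rightarrow> ('a \<Rightarrow> 'b qt) \<Rightarrow> 'b qt" where
  "bindq (Ret v) f = f v"
| "bindq (Ask q k) f = Ask q (\<lambda>a. bindq (k a) f)"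

primrec vals :: "((nat set \<times> nat) list \<Rightarrow> enat) \<Rightarrow> 'a qt \<Rightarrow> 'a" where
  "vals Q (Ret v) = v"
| "vals Q (Ask q k) = vals Q (k (Q q))"

primrec qlist :: "((nat set \<times> nat) list \<Rightarrow> enat) \<Rightarrow> 'a qt \<Rightarrow> (nat set \<times> nat) list list" where
  "qlist Q (Ret v) = []"
| "qlist Q (Ask q k) = q # qlist Q (k (Q q))"

lemma vals_bind[simp]: "vals Q (bindq t f) = vals Q (f (vals Q t))"
  by (induction t) auto

lemma qlist_bind[simp]: "qlist Q (bindq t f) = qlist Q t @ qlist Q (f (vals Q t))"
  by (induction t) auto

fun walk :: "'a qt \<Rightarrow> enat list \<Rightarrow> 'a qt" where
  "walk t [] = t"
| "walk (Ret v) (a # as) = Ret v"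
| "walk (Ask q k) (a # as) = walk (k a) as"

lemma walk_take:
  "(case walk t (take r (map Q (qlist Q t))) of Ret _ \<Rightarrow> length (qlist Q t) \<le> r
     | Ask q k \<Rightarrow> r < length (qlist Q t) \<and> q = qlist Q t ! r)"
proof (induction t arbitrary: r)
  case (Ret v) then show ?case by (cases r) auto
next
  case (Ask q k)
  show ?case
  proof (cases r)
    case 0 then show ?thesis by simp
  next
    case (Suc r')
    have "case walk (k (Q q)) (take r' (map Q (qlist Q (k (Q q))))) of Ret _ \<Rightarrow> length (qlist Q (k (Q q))) \<le> r'
     | Ask q' k' \<Rightarrow> r' < length (qlist Q (k (Q q))) \<and> q' = qlist Q (k (Q q)) ! r'"
      using Ask.IH[of "k (Q q)" r'] by simp
    then show ?thesis using Suc by (auto split: qt.splits)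
  qed
qed

lemma vals_cong_ans: "map Q1 (qlist Q1 t) = map Q2 (qlist Q2 t) \<Longrightarrow> vals Q1 t = vals Q2 t"
  by (induction t) auto

lemma walk_full: "walk t (map Q (qlist Q t)) = Ret (vals Q t)"
  by (induction t) auto

definition minq :: "nat set list \<Rightarrow> (nat set \<times> nat) list" where
  "minq L = map (\<lambda>A. (A, 0)) L"
definition rankq :: "nat set list \<Rightarrow> (nat set \<times> nat) list" where
  "rankq L = zip L [0..<length L]"
definition rem :: "nat \<Rightarrow> 'a list \<Rightarrow> 'a list" where
  "rem q L = take q L @ drop (Suc q) L"
definition comb :: "nat set \<Rightarrow> (nat \<Rightarrow> enat) \<Rightarrow> (nat \<Rightarrow> enat) \<Rightarrow> nat \<Rightarrow> enat" where
  "comb A g0 g1 = (\<lambda>j. if j \<in> A then g0 j else g1 j)"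

lemma length_rem[simp]: "q < length L \<Longrightarrow> length (rem q L) = length L - 1"
  by (simp add: rem_def)

function solve :: "(nat set \<Rightarrow> enat \<Rightarrow> (nat \<Rightarrow> enat) qt) \<Rightarrow> nat set list \<Rightarrow> enat \<Rightarrow> enat \<Rightarrow> (nat \<Rightarrow> enat) qt" where
 "solve fin L m r = (if L = [] then Ret (\<lambda>_. \<infinity>) else
   (let s = the_enat r - the_enat m in
    if length L \<le> s then Ret (\<lambda>_. \<infinity>) else
    bindq (if s = 0 then Ret None else Ask (rankq (drop s L)) (\<lambda>r'. Ret (if the_enat r' - the_enat m = 0 then None else Some r')))
     (\<lambda>c. case c of
        None \<Rightarrow> bindq (fin (L!s) m) (\<lambda>g0. Ask (minq (rem s L)) (\<lambda>mr. if mr = \<infinity> then Ret (comb (L!s) g0 (\<lambda>_. \<infinity>))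
              else Ask (rankq (rem s L)) (\<lambda>rr. bindq (solve fin (rem s L) mr rr) (\<lambda>g1. Ret (comb (L!s) g0 g1)))))
      | Some r' \<Rightarrow> if s = 0 then Ret (\<lambda>_. \<infinity>) else
           Ask (minq (take s L)) (\<lambda>mb. bindq (solve fin (take s L) mb r)
             (\<lambda>g1. bindq (solve fin (drop s L) m r') (\<lambda>g2. Ret (comb (\<Union>(set (take s L))) g1 g2)))))))"
  by pat_completeness auto
termination by (relation "measure (\<lambda>(fin,L,m,r). length L)") auto

declare solve.simps[simp del]

lemma Inf_enat_in: "A \<noteq> {} \<Longrightarrow> Inf A \<in> (A::enat set)"
  unfolding Inf_enat_def by (auto intro: LeastI)

lemma inf_char: "((v::enat) = (INF i\<in>I. f i)) \<longleftrightarrow> ((\<forall>i\<in>I. v \<le> f i) \<and> (v = \<infinity> \<or> (\<exists>i\<in>I. f i = v)))"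
proof
  assume v: "v = (INF i\<in>I. f i)"
  have "\<forall>i\<in>I. v \<le> f i" using v by (auto intro: INF_lower)
  moreover have "v = \<infinity> \<or> (\<exists>i\<in>I. f i = v)"
  proof (cases "I = {}")
    case True then show ?thesis using v by (simp add: top_enat_def)
  next
    case False
    then have "Inf (f ` I) \<in> f ` I" by (intro Inf_enat_in) auto
    then show ?thesis using v by auto
  qed
  ultimately show "(\<forall>i\<in>I. v \<le> f i) \<and> (v = \<infinity> \<or> (\<exists>i\<in>I. f i = v))" by blast
next
  assume h: "(\<forall>i\<in>I. v \<le> f i) \<and> (v = \<infinity> \<or> (\<exists>i\<in>I. f i = v))"
  show "v = (INF i\<in>I. f i)"
  proof (rule antisym)
    show "v \<le> (INF i\<in>I. f i)" using h by (auto intro: INF_greatest)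
    show "(INF i\<in>I. f i) \<le> v" using h
      by (metis INF_lower enat_ord_simps(3) order_top_class.top_greatest top_enat_def)
  qed
qed

lemma INF_add_right_enat: "(INF i\<in>I. f i) + (y::enat) = (INF i\<in>I. f i + y)"
proof (cases "I = {}")
  case True then show ?thesis by (simp add: top_enat_def)
next
  case False
  then obtain i0 where i0: "i0 \<in> I" "f i0 = (INF i\<in>I. f i)"
  proof -
    have "Inf (f ` I) \<in> f ` I" using False by (intro Inf_enat_in) auto
    then show ?thesis using that by (metis imageE)
  qed
  show ?thesis
  proof (rule antisym)
    show "(INF i\<in>I. f i) + y \<le> (INF i\<in>I. f i + y)"
      by (rule INF_greatest) (simp add: INF_lower add_right_mono)
    show "(INF i\<in>I. f i + y) \<le> (INF i\<in>I. f i) + y"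
      using i0 by (metis INF_lower)
  qed
qed

lemma INF_add_left_enat: "(y::enat) + (INF i\<in>I. f i) = (INF i\<in>I. y + f i)"
  using INF_add_right_enat[of f I y] by (simp add: add.commute)

definition mkrow :: "nat \<Rightarrow> nat \<Rightarrow> (nat set \<times> nat) list \<Rightarrow> enat list" where
  "mkrow N l q = map (\<lambda>j. INF p\<in>{p\<in>set q. j \<in> fst p}. enat (min (snd p) l)) [0..<N]"

definition mnx :: "nat \<Rightarrow> enat list \<Rightarrow> nat set \<Rightarrow> enat" where
  "mnx N x A = (INF j\<in>A \<inter> {..<N}. x ! j)"

lemma trop_row_mkrow:
  assumes "length x = N"
  shows "trop_row (mkrow N l q) x = (INF p\<in>set q. enat (min (snd p) l) + mnx N x (fst p))"
proof -
  have "trop_row (mkrow N l q) x = (INF j\<in>{..<N}. INF p\<in>{p\<in>set q. j \<in> fst p}. enat (min (snd p) l) + x ! j)"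
    unfolding trop_row_def mkrow_def using assms by (simp add: INF_add_right_enat)
  also have "\<dots> = (INF p\<in>set q. INF j\<in>fst p \<inter> {..<N}. enat (min (snd p) l) + x ! j)"
    by (rule antisym; auto intro!: INF_greatest intro: INF_lower2)
  also have "\<dots> = (INF p\<in>set q. enat (min (snd p) l) + mnx N x (fst p))"
    unfolding mnx_def by (simp add: INF_add_left_enat)
  finally show ?thesis .
qed

definition ansx :: "nat \<Rightarrow> nat \<Rightarrow> enat list \<Rightarrow> (nat set \<times> nat) list \<Rightarrow> enat" where
  "ansx N l x q = (INF p\<in>set q. enat (min (snd p) l) + mnx N x (fst p))"

definition cor :: "nat \<Rightarrow> enat list \<Rightarrow> (nat \<Rightarrow> enat) \<Rightarrow> nat set \<Rightarrow> bool" where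
  "cor N x g A = (\<forall>j\<in>A \<inter> {..<N}. g j = x ! j)"

lemma ansx_minq: "ansx N l x (minq L) = (INF A\<in>set L. mnx N x A)"
  unfolding ansx_def minq_def by (simp add: image_image zero_enat_def[symmetric])

lemma ansx_rankq: "length L \<le> l \<Longrightarrow> ansx N l x (rankq L) = (INF i\<in>{..<length L}. enat i + mnx N x (L!i))"
proof -
  assume "length L \<le> l"
  have "set (rankq L) = (\<lambda>i. (L!i, i)) ` {..<length L}"
    unfolding rankq_def by (auto simp: set_zip)
  then have "ansx N l x (rankq L) = (INF i\<in>{..<length L}. enat (min i l) + mnx N x (L!i))"
    unfolding ansx_def by (simp add: image_image)
  also have "\<dots> = (INF i\<in>{..<length L}. enat i + mnx N x (L!i))"
    using \<open>length L \<le> l\<close> by (intro INF_cong) auto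
  finally show ?thesis .
qed

lemma set_conv_idx: "set L = (\<lambda>i. L!i) ` {..<length L}"
  by (auto simp: in_set_conv_nth)

lemma INF_set_idx: "(INF A\<in>set L. f A) = (INF i\<in>{..<length L}. f (L!i))"
  by (simp add: set_conv_idx image_image)

definition foundt :: "(nat set list \<Rightarrow> enat \<Rightarrow> enat \<Rightarrow> (nat \<Rightarrow> enat) qt) \<Rightarrow> (nat set \<Rightarrow> enat \<Rightarrow> (nat \<Rightarrow> enat) qt) \<Rightarrow> nat set list \<Rightarrow> nat \<Rightarrow> enat \<Rightarrow> (nat \<Rightarrow> enat) qt" where
 "foundt rc fin L s m = bindq (fin (L!s) m) (\<lambda>g0. Ask (minq (rem s L)) (\<lambda>mr. if mr = \<infinity> then Ret (comb (L!s) g0 (\<lambda>_. \<infinity>))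
              else Ask (rankq (rem s L)) (\<lambda>rr. bindq (rc (rem s L) mr rr) (\<lambda>g1. Ret (comb (L!s) g0 g1)))))"

lemma solve_eq: "solve fin L m r = (if L = [] then Ret (\<lambda>_. \<infinity>) else
   (let s = the_enat r - the_enat m in
    if length L \<le> s then Ret (\<lambda>_. \<infinity>) else
    bindq (if s = 0 then Ret None else Ask (rankq (drop s L)) (\<lambda>r'. Ret (if the_enat r' - the_enat m = 0 then None else Some r')))
     (\<lambda>c. case c of
        None \<Rightarrow> foundt (solve fin) fin L s m
      | Some r' \<Rightarrow> if s = 0 then Ret (\<lambda>_. \<infinity>) else
           Ask (minq (take s L)) (\<lambda>mb. bindq (solve fin (take s L) mb r)
             (\<lambda>g1. bindq (solve fin (drop s L) m r') (\<lambda>g2. Ret (comb (\<Union>(set (take s L))) g1 g2)))))))"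
  apply (subst solve.simps) unfolding foundt_def by (rule refl)

lemma set_rem: "q < length L \<Longrightarrow> set L = insert (L!q) (set (rem q L))"
proof -
  assume q: "q < length L"
  have "L = take q L @ L!q # drop (Suc q) L" using q by (simp add: id_take_nth_drop)
  then have "set L = set (take q L) \<union> insert (L!q) (set (drop (Suc q) L))"
    by (metis set_append list.simps(15))
  then show ?thesis unfolding rem_def by auto
qed

lemma sum_rem: "q < length L \<Longrightarrow> sum_list (map (f::_\<Rightarrow>nat) L) = f (L!q) + sum_list (map f (rem q L))"
proof -
  assume q: "q < length L"
  have "L = take q L @ L!q # drop (Suc q) L" using q by (simp add: id_take_nth_drop)
  then have "sum_list (map f L) = sum_list (map f (take q L)) + (f (L!q) + sum_list (map f (drop (Suc q) L)))"
    by (metis map_append sum_list_append list.map(2) sum_list.Cons)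
  then show ?thesis unfolding rem_def by (simp add: add_ac)
qed

context
  fixes N l :: nat and x :: "enat list" and fin :: "nat set \<Rightarrow> enat \<Rightarrow> (nat \<Rightarrow> enat) qt" and B :: "nat set \<Rightarrow> nat"
begin

abbreviation "Q \<equiv> ansx N l x"
abbreviation "mn \<equiv> mnx N x"
abbreviation "W L \<equiv> sum_list (map (\<lambda>A. if mn A = \<infinity> then 0 else 4 + B A) L)"
abbreviation "corL g L \<equiv> (\<forall>A\<in>set L. cor N x g A)"
abbreviation "finok L \<equiv> (\<forall>A\<in>set L. mn A \<noteq> \<infinity> \<longrightarrow> cor N x (vals Q (fin A (mn A))) A \<and> length (qlist Q (fin A (mn A))) \<le> B A)"
abbreviation "good L m r \<equiv> length L \<le> l \<and> finok L \<and> m = (INF A\<in>set L. mn A) \<and> m \<noteq> \<infinity> \<and> r = (INF i\<in>{..<length L}. enat i + mn (L!i))"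

lemma mn_inf: "mn A = \<infinity> \<Longrightarrow> j \<in> A \<Longrightarrow> j < N \<Longrightarrow> x ! j = \<infinity>"
  unfolding mnx_def by (metis INF_lower IntI enat_ord_simps(5) lessThan_iff)

lemma found_ok:
  assumes q: "q < length L" and mq: "mn (L!q) = m" and mf: "m \<noteq> \<infinity>" and len: "length L \<le> l" and fo: "finok L"
    and rc: "\<And>mr rr. good (rem q L) mr rr \<Longrightarrow> corL (vals Q (rc (rem q L) mr rr)) (rem q L) \<and> length (qlist Q (rc (rem q L) mr rr)) + 2 \<le> W (rem q L)"
  shows "corL (vals Q (foundt rc fin L q m)) L \<and> length (qlist Q (foundt rc fin L q m)) + 3 \<le> W L"
proof -
  define R where "R = rem q L"
  define g0 where "g0 = vals Q (fin (L!q) m)"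
  have Lq: "L!q \<in> set L" using q by simp
  have f0: "cor N x g0 (L!q)" "length (qlist Q (fin (L!q) m)) \<le> B (L!q)"
    using fo Lq mq mf unfolding g0_def by auto
  have WL: "W L = 4 + B (L!q) + W R" using sum_rem[OF q, of "\<lambda>A. if mn A = \<infinity> then 0 else 4 + B A"] mq mf unfolding R_def by simp
  have sL: "set L = insert (L!q) (set R)" using set_rem[OF q] unfolding R_def .
  define mr where "mr = Q (minq R)"
  have mr: "mr = (INF A\<in>set R. mn A)" unfolding mr_def by (simp add: ansx_minq)
  show ?thesis
  proof (cases "mr = \<infinity>")
    case True
    have "\<forall>A\<in>set R. mn A = \<infinity>" using True mr by (metis INF_lower enat_ord_simps(5))
    then have "corL (comb (L!q) g0 (\<lambda>_. \<infinity>)) L" using f0(1) sL mn_inf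
      unfolding cor_def comb_def by auto
    then show ?thesis using True f0(2) WL
      by (simp add: foundt_def mr_def R_def g0_def)
  next
    case False
    define rr where "rr = Q (rankq R)"
    have lR: "length R \<le> l" using len q unfolding R_def by simp
    have "good R mr rr" using lR fo sL False mr ansx_rankq[OF lR] unfolding rr_def by auto
    then have ih: "corL (vals Q (rc R mr rr)) R" "length (qlist Q (rc R mr rr)) + 2 \<le> W R"
      using rc unfolding R_def by auto
    have "corL (comb (L!q) g0 (vals Q (rc R mr rr))) L" using f0(1) ih(1) sL
      unfolding cor_def comb_def by auto
    moreover have "Q (minq (rem q L)) \<noteq> \<infinity>" using False unfolding mr_def R_def .
    ultimately show ?thesis using f0(2) WL ih(2)
      by (auto simp: foundt_def mr_def R_def g0_def rr_def[unfolded R_def])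
  qed
qed


lemma inf_le: "(v::enat) = (INF i\<in>I. f i) \<Longrightarrow> i \<in> I \<Longrightarrow> v \<le> f i"
  by (simp add: INF_lower)
lemma inf_att: assumes "(v::enat) = (INF i\<in>I. f i)" "v \<noteq> \<infinity>" shows "\<exists>i\<in>I. f i = v"
proof -
  have "(\<forall>i\<in>I. v \<le> f i) \<and> (v = \<infinity> \<or> (\<exists>i\<in>I. f i = v))" using inf_char[THEN iffD1, OF assms(1)] .
  then show ?thesis using assms(2) by blast
qed

lemma solve_ok: "good L m r \<Longrightarrow> corL (vals Q (solve fin L m r)) L \<and> length (qlist Q (solve fin L m r)) + 2 \<le> W L"
proof (induction "length L" arbitrary: L m r rule: less_induct)
  case less
  note G = less.prems
  define n where "n = length L"
  have len: "length L \<le> l" and fo: "finok L" and mdef: "m = (INF A\<in>set L. mn A)" and mf: "m \<noteq> \<infinity>"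
    and rdef: "r = (INF i\<in>{..<n}. enat i + mn (L!i))" using G n_def by auto
  have m_idx: "m = (INF i\<in>{..<n}. mn (L!i))" using mdef INF_set_idx n_def by simp
  have a_ge: "\<And>i. i < n \<Longrightarrow> m \<le> mn (L!i)" using inf_le[OF m_idx] by simp
  obtain i0 where i0: "i0 < n" "mn (L!i0) = m" using inf_att[OF m_idx mf] by auto
  have r_ge: "\<And>i. i < n \<Longrightarrow> r \<le> enat i + mn (L!i)" using inf_le[OF rdef] by simp
  obtain mm where mm: "m = enat mm" using mf by auto
  have "r \<le> enat i0 + m" using r_ge[OF i0(1)] i0(2) by simp
  then have rf: "r \<noteq> \<infinity>" using mm by (cases r) auto
  obtain ir where ir: "ir < n" "enat ir + mn (L!ir) = r" using inf_att[OF rdef rf] by auto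
  obtain rr where rr: "r = enat rr" using rf by auto
  obtain b where b: "mn (L!ir) = enat b" using ir rr by (cases "mn (L!ir)") auto
  have irb: "ir + b = rr" using ir(2) b rr by simp
  have "mm \<le> b" using a_ge[OF ir(1)] b mm by simp
  define s where "s = rr - mm"
  have ts: "the_enat r - the_enat m = s" using rr mm s_def by simp
  have s_le: "s \<le> i0" using r_ge[OF i0(1)] i0(2) rr mm s_def by simp
  have keyA: "\<And>i. i < n \<Longrightarrow> mn (L!i) = m \<Longrightarrow> s \<le> i"
  proof -
    fix i assume i: "i < n" "mn (L!i) = m"
    have "r \<le> enat i + m" using r_ge[OF i(1)] unfolding i(2) .
    then show "s \<le> i" using rr mm s_def by simp
  qed
  have Lne: "L \<noteq> []" using i0 n_def by auto
  have sn: "\<not> length L \<le> s" using s_le i0 n_def by simp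
  have WLs0: "W (take s L) + W (drop s L) = W L"
    by (simp only: sum_list_append[symmetric] map_append[symmetric] append_take_drop_id)
  note WLs = WLs0[symmetric]
  show ?case
  proof (cases "s = 0")
    case True
    have a0: "mn (L!0) = m" using irb \<open>mm \<le> b\<close> True s_def b mm by (cases ir) auto
    have "corL (vals Q (foundt (solve fin) fin L 0 m)) L \<and> length (qlist Q (foundt (solve fin) fin L 0 m)) + 3 \<le> W L"
    proof (rule found_ok)
      show "0 < length L" using Lne by simp
      fix mr rr' assume "good (rem 0 L) mr rr'"
      moreover have "length (rem 0 L) < length L" using Lne by simp
      ultimately show "corL (vals Q (solve fin (rem 0 L) mr rr')) (rem 0 L) \<and> length (qlist Q (solve fin (rem 0 L) mr rr')) + 2 \<le> W (rem 0 L)"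
        using less.hyps by blast
    qed (use a0 mf len fo in auto)
    moreover have "solve fin L m r = foundt (solve fin) fin L 0 m"
      by (subst solve_eq) (simp add: Lne ts True sn)
    ultimately show ?thesis by simp
  next
    case False
    define D where "D = drop s L"
    define r' where "r' = Q (rankq D)"
    have lD: "length D = n - s" using D_def n_def by simp
    have Di: "\<And>i. i < n - s \<Longrightarrow> D!i = L!(s+i)" using D_def n_def by simp
    have r'def: "r' = (INF i\<in>{..<length D}. enat i + mn (D!i))"
      unfolding r'_def by (rule ansx_rankq) (use len D_def in simp)
    have sD: "s \<le> i0" using s_le .
    have r'_ge: "\<And>i. i < n - s \<Longrightarrow> m \<le> enat i + mn (L!(s+i))"
    proof -
      fix i assume "i < n - s"
      then have "r \<le> enat (s+i) + mn (L!(s+i))" using r_ge by simp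
      then show "m \<le> enat i + mn (L!(s+i))" using rr mm s_def \<open>mm \<le> b\<close> irb
        by (cases "mn (L!(s+i))") auto
    qed
    have "r' \<le> enat (i0 - s) + mn (D!(i0 - s))" using r'def i0 sD lD by (auto intro: INF_lower)
    then have r'le: "r' \<le> enat (i0 - s) + m" using Di[of "i0 - s"] i0 sD by simp
    then obtain r'n where r'n: "r' = enat r'n" using mm by (cases r') auto
    have r'ge: "m \<le> r'" using r'def r'_ge Di lD by (auto intro!: INF_greatest)
    define s' where "s' = r'n - mm"
    have ts': "the_enat r' - the_enat m = s'" using r'n mm s'_def by simp
    have ts'': "(the_enat (Q (rankq (drop s L))) \<le> the_enat m) = (s' = 0)" using ts' unfolding r'_def D_def by linarith
    have tsa: "(the_enat r \<le> the_enat m) = (s = 0)" using ts by linarith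
    have lD': "length D < length L" using False D_def Lne by simp
    show ?thesis
    proof (cases "s' = 0")
      case True
      have r'm: "r' = m" using True s'_def r'n mm r'ge by simp
      obtain j where j: "j < length D" "enat j + mn (D!j) = r'" using inf_att[OF r'def] r'n by auto
      have "mn (D!j) \<ge> m" using a_ge Di j lD by (metis add_lessD1 less_diff_conv add.commute)
      then have "j = 0" "mn (D!0) = m" using j r'm mm by (cases "mn (D!j)"; cases j; auto)+
      then have as: "mn (L!s) = m" using Di lD j by (metis add_0_right)
      have "corL (vals Q (foundt (solve fin) fin L s m)) L \<and> length (qlist Q (foundt (solve fin) fin L s m)) + 3 \<le> W L"
      proof (rule found_ok)
        show "s < length L" using sn by simp
        fix mr rr' assume "good (rem s L) mr rr'"
        moreover have "length (rem s L) < length L" using sn Lne by simp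
        ultimately show "corL (vals Q (solve fin (rem s L) mr rr')) (rem s L) \<and> length (qlist Q (solve fin (rem s L) mr rr')) + 2 \<le> W (rem s L)"
          using less.hyps by blast
      qed (use as mf len fo in auto)
      moreover have "vals Q (solve fin L m r) = vals Q (foundt (solve fin) fin L s m)"
        "qlist Q (solve fin L m r) = rankq D # qlist Q (foundt (solve fin) fin L s m)"
        by (subst solve_eq, simp add: Lne ts tsa False sn ts'' True D_def)+
      ultimately show ?thesis by simp
    next
      case s'F: False
      define T where "T = take s L"
      define mb where "mb = Q (minq T)"
      have irs: "ir < s"
      proof (rule ccontr)
        assume "\<not> ir < s"
        then have "r' \<le> enat (ir - s) + mn (D!(ir - s))" using r'def ir lD by (auto intro: INF_lower)
        also have "\<dots> = m"
        proof -
          have e1: "ir - s + b = mm" using irb s_def \<open>mm \<le> b\<close> \<open>\<not> ir < s\<close> by linarith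
          have "D!(ir - s) = L!ir" using Di[of "ir - s"] ir \<open>\<not> ir < s\<close> by simp
          then show ?thesis using e1 b mm by simp
        qed
        finally show False using r'ge r'n mm s'F s'_def by simp
      qed
      have lT: "length T = s" using T_def sn by simp
      have Ti: "\<And>i. i < s \<Longrightarrow> T!i = L!i" using T_def by simp
      have goodT: "good T mb r"
      proof (intro conjI)
        show "length T \<le> l" using lT sn len by simp
        show "finok T" using fo T_def by (meson in_set_takeD)
        show "mb = (INF A\<in>set T. mn A)" unfolding mb_def by (simp add: ansx_minq)
        have "L!ir \<in> set T" using irs T_def sn by (metis Ti lT nth_mem)
        then have "mb \<le> enat b" unfolding mb_def using b by (simp add: ansx_minq INF_lower2)
        then show "mb \<noteq> \<infinity>" by (cases mb) auto
        show "r = (INF i\<in>{..<length T}. enat i + mn (T!i))"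
          unfolding inf_char using r_ge Ti lT ir irs n_def sn by auto
      qed
      have goodD: "good D m r'"
      proof (intro conjI)
        show "length D \<le> l" using lD n_def len by simp
        show "finok D" using fo D_def by (meson in_set_dropD)
        show "m \<noteq> \<infinity>" by fact
        show "r' = (INF i\<in>{..<length D}. enat i + mn (D!i))" by fact
        have "\<forall>A\<in>set D. m \<le> mn A" using a_ge Di lD by (auto simp: in_set_conv_nth)
        moreover have "D!(i0-s) \<in> set D" using i0 keyA[OF i0] lD by (intro nth_mem) simp
        moreover have "mn (D!(i0-s)) = m" using Di[of "i0 - s"] i0 keyA[OF i0] lD by simp
        ultimately show "m = (INF A\<in>set D. mn A)" unfolding inf_char by auto
      qed
      have ihT: "corL (vals Q (solve fin T mb r)) T \<and> length (qlist Q (solve fin T mb r)) + 2 \<le> W T"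
        using less.hyps[of T] goodT lT sn by auto
      have ihD: "corL (vals Q (solve fin D m r')) D \<and> length (qlist Q (solve fin D m r')) + 2 \<le> W D"
        using less.hyps[of D] goodD lD' by auto
      have ev: "vals Q (solve fin L m r) = comb (\<Union>(set T)) (vals Q (solve fin T mb r)) (vals Q (solve fin D m r'))"
        "qlist Q (solve fin L m r) = rankq D # minq T # qlist Q (solve fin T mb r) @ qlist Q (solve fin D m r')"
        by (subst solve_eq, simp add: Lne ts tsa False sn ts'' s'F D_def T_def mb_def r'_def)+
      have sL: "set L = set T \<union> set D" unfolding T_def D_def by (metis append_take_drop_id set_append)
      have "corL (comb (\<Union>(set T)) (vals Q (solve fin T mb r)) (vals Q (solve fin D m r'))) L"
        using ihT ihD sL unfolding cor_def comb_def by fastforce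
      then show ?thesis using ev ihT ihD WLs T_def D_def by simp
    qed
  qed
qed

end

definition children :: "nat \<Rightarrow> nat \<Rightarrow> nat set \<Rightarrow> nat set list" where
  "children l h A = map (\<lambda>i. {j\<in>A. j div l^h mod l = i}) [0..<l]"

fun node :: "nat \<Rightarrow> nat \<Rightarrow> nat set \<Rightarrow> enat \<Rightarrow> (nat \<Rightarrow> enat) qt" where
  "node l 0 A m = Ret (\<lambda>_. m)"
| "node l (Suc h) A m = Ask (rankq (children l h A)) (\<lambda>r. solve (node l h) (children l h A) m r)"

definition Fc :: "nat \<Rightarrow> enat list \<Rightarrow> nat set \<Rightarrow> nat" where
  "Fc N x A = card {j\<in>A \<inter> {..<N}. x!j \<noteq> \<infinity>}"

lemma INF_UNION': "(INF x\<in>(\<Union>y\<in>A. g y). f x) = (INF y\<in>A. INF x\<in>g y. f x :: _ :: complete_lattice)"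
  by (rule order_antisym) (blast intro: INF_greatest INF_lower2)+

lemma card_split:
  assumes "finite S" "\<forall>j\<in>S. f j < (l::nat)"
  shows "(\<Sum>i<l. card {j\<in>S. f j = i}) = card S"
proof -
  have "S = (\<Union>i\<in>{..<l}. {j\<in>S. f j = i})" using assms(2) by auto
  then have "card S = card (\<Union>i\<in>{..<l}. {j\<in>S. f j = i})" by simp
  also have "\<dots> = (\<Sum>i<l. card {j\<in>S. f j = i})"
    by (rule card_UN_disjoint) (use assms(1) in auto)
  finally show ?thesis by simp
qed

lemma node_ok:
  assumes l: "l \<ge> 2"
  shows "\<forall>j\<in>A \<inter> {..<N}. \<forall>j'\<in>A \<inter> {..<N}. j div l^h = j' div l^h \<Longrightarrow> m = mnx N x A \<Longrightarrow> m \<noteq> \<infinity> \<Longrightarrow>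
    cor N x (vals (ansx N l x) (node l h A m)) A \<and> length (qlist (ansx N l x) (node l h A m)) \<le> 4 * h * Fc N x A"
proof (induction h arbitrary: A m)
  case 0
  obtain j0 where j0: "j0 \<in> A \<inter> {..<N}"
    using 0(2,3) unfolding mnx_def by (metis INF_empty top_enat_def ex_in_conv)
  have eq: "\<And>j. j \<in> A \<inter> {..<N} \<Longrightarrow> j = j0" using 0(1) j0 by force
  then have "A \<inter> {..<N} = {j0}" using j0 by blast
  then have "m = x ! j0" using 0(2) unfolding mnx_def by simp
  then show ?case using eq unfolding cor_def by simp
next
  case (Suc h)
  define Cs where "Cs = children l h A"
  have lCs: "length Cs = l" unfolding Cs_def children_def by simp
  have Csi: "\<And>i. i < l \<Longrightarrow> Cs!i = {j\<in>A. j div l^h mod l = i}" unfolding Cs_def children_def by simp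
  have setCs: "set Cs = (\<lambda>i. {j\<in>A. j div l^h mod l = i}) ` {..<l}" unfolding Cs_def children_def by auto
  have inv: "\<And>C. C \<in> set Cs \<Longrightarrow> \<forall>j\<in>C \<inter> {..<N}. \<forall>j'\<in>C \<inter> {..<N}. j div l^h = j' div l^h"
  proof -
    fix C assume "C \<in> set Cs"
    then obtain i where C: "C = {j\<in>A. j div l^h mod l = i}" using setCs by auto
    show "\<forall>j\<in>C \<inter> {..<N}. \<forall>j'\<in>C \<inter> {..<N}. j div l^h = j' div l^h"
    proof (intro ballI)
      fix j j' assume jj: "j \<in> C \<inter> {..<N}" "j' \<in> C \<inter> {..<N}"
      have "j div l^(Suc h) = j' div l^(Suc h)" using Suc.prems(1) jj C by auto
      then have "j div l^h div l = j' div l^h div l" by (metis div_mult2_eq power_Suc2)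
      moreover have "j div l^h mod l = j' div l^h mod l" using jj C by auto
      ultimately show "j div l^h = j' div l^h" by (metis div_mult_mod_eq)
    qed
  qed
  define B where "B = (\<lambda>C. 4 * h * Fc N x C)"
  have finok: "\<forall>C\<in>set Cs. mnx N x C \<noteq> \<infinity> \<longrightarrow> cor N x (vals (ansx N l x) (node l h C (mnx N x C))) C \<and>
      length (qlist (ansx N l x) (node l h C (mnx N x C))) \<le> B C"
    using Suc.IH inv unfolding B_def by blast
  have unionA: "A \<inter> {..<N} = (\<Union>C\<in>set Cs. C \<inter> {..<N})"
    using l unfolding setCs by auto
  have "mnx N x A = (INF j\<in>(\<Union>C\<in>set Cs. C \<inter> {..<N}). x!j)" unfolding mnx_def unionA ..
  also have "\<dots> = (INF C\<in>set Cs. INF j\<in>C \<inter> {..<N}. x!j)" by (rule INF_UNION')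
  finally have mCs: "m = (INF C\<in>set Cs. mnx N x C)" using Suc.prems(2) unfolding mnx_def by simp
  define r where "r = ansx N l x (rankq Cs)"
  have rdef: "r = (INF i\<in>{..<length Cs}. enat i + mnx N x (Cs!i))"
    unfolding r_def by (rule ansx_rankq) (simp add: lCs)
  have S: "cor N x (vals (ansx N l x) (solve (node l h) Cs m r)) A \<and> length (qlist (ansx N l x) (solve (node l h) Cs m r)) + 2
      \<le> sum_list (map (\<lambda>C. if mnx N x C = \<infinity> then 0 else 4 + B C) Cs)"
  proof -
    have "(\<forall>C\<in>set Cs. cor N x (vals (ansx N l x) (solve (node l h) Cs m r)) C) \<and> length (qlist (ansx N l x) (solve (node l h) Cs m r)) + 2
      \<le> sum_list (map (\<lambda>C. if mnx N x C = \<infinity> then 0 else 4 + B C) Cs)"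
      by (rule solve_ok) (use lCs finok mCs Suc.prems(3) rdef in auto)
    moreover have "\<And>g. (\<forall>C\<in>set Cs. cor N x g C) \<Longrightarrow> cor N x g A"
      unfolding cor_def using unionA by blast
    ultimately show ?thesis by blast
  qed
  have Fpos: "\<And>C. mnx N x C \<noteq> \<infinity> \<Longrightarrow> 1 \<le> Fc N x C"
  proof -
    fix C assume "mnx N x C \<noteq> \<infinity>"
    then obtain j where "j \<in> C \<inter> {..<N}" "x!j \<noteq> \<infinity>"
      using inf_att[of "mnx N x C" "\<lambda>j. x!j" "C \<inter> {..<N}"] unfolding mnx_def by auto
    then have "{j\<in>C \<inter> {..<N}. x!j \<noteq> \<infinity>} \<noteq> {}" by auto
    then show "1 \<le> Fc N x C" unfolding Fc_def by (simp add: Suc_le_eq card_gt_0_iff)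
  qed
  have "sum_list (map (\<lambda>C. if mnx N x C = \<infinity> then 0 else 4 + B C) Cs) \<le> sum_list (map (\<lambda>C. 4 * Suc h * Fc N x C) Cs)"
  proof (rule sum_list_mono)
    fix C assume "C \<in> set Cs"
    show "(if mnx N x C = \<infinity> then 0 else 4 + B C) \<le> 4 * Suc h * Fc N x C"
      using Fpos[of C] unfolding B_def by (auto simp: add_mult_distrib)
  qed
  also have "\<dots> = 4 * Suc h * sum_list (map (Fc N x) Cs)"
    by (simp add: sum_list_const_mult[symmetric] o_def)
  also have "sum_list (map (Fc N x) Cs) = (\<Sum>i<l. card {j\<in>{j\<in>A \<inter> {..<N}. x!j \<noteq> \<infinity>}. j div l^h mod l = i})"
  proof -
    have "sum_list (map (Fc N x) Cs) = (\<Sum>i<l. Fc N x (Cs!i))"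
      by (simp add: sum_list_sum_nth lCs atLeast0LessThan)
    also have "\<dots> = (\<Sum>i<l. card {j\<in>{j\<in>A \<inter> {..<N}. x!j \<noteq> \<infinity>}. j div l^h mod l = i})"
      by (rule sum.cong) (auto simp: Csi Fc_def intro!: arg_cong[where f=card])
    finally show ?thesis .
  qed
  also have "(\<Sum>i<l. card {j\<in>{j\<in>A \<inter> {..<N}. x!j \<noteq> \<infinity>}. j div l^h mod l = i}) = Fc N x A"
    unfolding Fc_def by (rule card_split) (use l in auto)
  finally have W: "sum_list (map (\<lambda>C. if mnx N x C = \<infinity> then 0 else 4 + B C) Cs) \<le> 4 * Suc h * Fc N x A" .
  have "vals (ansx N l x) (node l (Suc h) A m) = vals (ansx N l x) (solve (node l h) Cs m r)"
       "length (qlist (ansx N l x) (node l (Suc h) A m)) = 1 + length (qlist (ansx N l x) (solve (node l h) Cs m r))"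
    unfolding Cs_def r_def by simp_all
  then show ?case using S W by simp
qed

definition topt :: "nat \<Rightarrow> nat \<Rightarrow> nat \<Rightarrow> (nat \<Rightarrow> enat) qt" where
  "topt N l k = Ask [({..<N}, 0)] (\<lambda>m. if m = \<infinity> then Ret (\<lambda>_. \<infinity>) else node l k {..<N} m)"

definition protP :: "nat \<Rightarrow> nat \<Rightarrow> nat \<Rightarrow> nat \<Rightarrow> enat list \<Rightarrow> enat list list" where
  "protP N l k r res = (case walk (topt N l k) res of Ret _ \<Rightarrow> [] | Ask q _ \<Rightarrow> [mkrow N l q])"

lemma run_eq:
  "trop_run (protP N l k) r x = take r (map (\<lambda>q. trop_row (mkrow N l q) x) (qlist (\<lambda>q. trop_row (mkrow N l q) x) (topt N l k)))"
proof (induction r)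
  case 0 then show ?case by simp
next
  case (Suc r)
  define Qx where "Qx = (\<lambda>q. trop_row (mkrow N l q) x)"
  define A where "A = map Qx (qlist Qx (topt N l k))"
  have IH: "trop_run (protP N l k) r x = take r A" using Suc unfolding A_def Qx_def .
  have W: "case walk (topt N l k) (take r A) of Ret _ \<Rightarrow> length (qlist Qx (topt N l k)) \<le> r
     | Ask q k' \<Rightarrow> r < length (qlist Qx (topt N l k)) \<and> q = qlist Qx (topt N l k) ! r"
    unfolding A_def by (rule walk_take)
  show ?case
  proof (cases "walk (topt N l k) (take r A)")
    case (Ret v)
    then have "length A \<le> r" using W unfolding A_def by simp
    then show ?thesis using IH Ret unfolding protP_def A_def Qx_def by (simp add: trop_mult_def)
  next
    case (Ask q k')
    then have "r < length A" "q = qlist Qx (topt N l k) ! r" using W unfolding A_def by auto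
    then have "A ! r = trop_row (mkrow N l q) x" unfolding A_def Qx_def by simp
    then have "take (Suc r) A = take r A @ [trop_row (mkrow N l q) x]"
      using \<open>r < length A\<close> by (simp add: take_Suc_conv_app_nth)
    then show ?thesis using IH Ask unfolding protP_def A_def Qx_def by (simp add: trop_mult_def)
  qed
qed

lemma mkrow_ok: "e \<in> set (mkrow N l q) \<Longrightarrow> e = \<infinity> \<or> e \<le> enat l"
proof -
  assume "e \<in> set (mkrow N l q)"
  then obtain j where e: "e = (INF p\<in>{p\<in>set q. j \<in> fst p}. enat (min (snd p) l))"
    unfolding mkrow_def by auto
  show ?thesis
  proof (cases "{p\<in>set q. j \<in> fst p} = {}")
    case True
    have "e = \<infinity>" unfolding e True by (simp add: top_enat_def)
    then show ?thesis by simp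
  next
    case False
    then obtain p where "p \<in> {p\<in>set q. j \<in> fst p}" by blast
    then have "e \<le> enat (min (snd p) l)" using e by (auto intro: INF_lower)
    then show ?thesis by (meson enat_ord_simps(1) min.cobounded2 order_trans)
  qed
qed

lemma top_ok:
  assumes l: "l \<ge> 2" and lx: "length x = N" and Nk: "N \<le> l ^ k"
  shows "(\<forall>j<N. vals (ansx N l x) (topt N l k) j = x ! j) \<and> length (qlist (ansx N l x) (topt N l k)) \<le> 1 + 4 * k * num_finite x"
proof -
  define m where "m = ansx N l x [({..<N}, 0)]"
  have m: "m = mnx N x {..<N}" unfolding m_def ansx_def by (simp add: zero_enat_def[symmetric])
  have F: "Fc N x {..<N} = num_finite x" unfolding Fc_def num_finite_def using lx by (metis Int_absorb lessThan_iff mem_Collect_eq)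
  show ?thesis
  proof (cases "m = \<infinity>")
    case True
    then have "\<forall>j<N. x!j = \<infinity>" using m by (metis lessThan_iff mn_inf)
    then show ?thesis using True unfolding topt_def m_def by simp
  next
    case False
    have inv: "\<forall>j\<in>{..<N} \<inter> {..<N}. \<forall>j'\<in>{..<N} \<inter> {..<N}. j div l^k = j' div l^k"
      using Nk by auto
    have "cor N x (vals (ansx N l x) (node l k {..<N} m)) {..<N} \<and> length (qlist (ansx N l x) (node l k {..<N} m)) \<le> 4 * k * Fc N x {..<N}"
      by (rule node_ok[OF l inv m False])
    moreover have "vals (ansx N l x) (topt N l k) = vals (ansx N l x) (node l k {..<N} m)"
      "length (qlist (ansx N l x) (topt N l k)) = 1 + length (qlist (ansx N l x) (node l k {..<N} m))"
      using False unfolding topt_def m_def by auto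
    ultimately show ?thesis using F unfolding cor_def by simp
  qed
qed

lemma rows_mkrow: "row \<in> set (protP N l k r res) \<Longrightarrow> \<exists>q. row = mkrow N l q"
  unfolding protP_def by (auto split: qt.splits)

lemma Qx_eq: "length x = N \<Longrightarrow> (\<lambda>q. trop_row (mkrow N l q) x) = ansx N l x"
  by (rule ext) (simp add: trop_row_mkrow ansx_def)

lemma Nk_bound:
  assumes l: "(l::nat) \<ge> 2" and N: "N \<ge> 1"
  shows "N \<le> l ^ nat \<lceil>log (real l) (real N)\<rceil>"
proof -
  have lg: "0 \<le> log (real l) (real N)" using l N by simp
  have "real N = real l powr (log (real l) (real N))" using l N by simp
  also have "\<dots> \<le> real l powr (real (nat \<lceil>log (real l) (real N)\<rceil>))"
    by (rule powr_mono) (use l lg in auto)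
  also have "\<dots> = real (l ^ nat \<lceil>log (real l) (real N)\<rceil>)" using l by (simp add: powr_realpow)
  finally show ?thesis by linarith
qed

theorem mainTheorem18:
  fixes l N D :: nat
  assumes "l \<ge> 2" and "N \<ge> 1"
  defines "T \<equiv> 4 * D * nat \<lceil>log (real l) (real N)\<rceil> + 1"
  shows "\<exists>P. tropical_protocol T T N D P \<and> within_delay T N l P"
proof -
  define k where "k = nat \<lceil>log (real l) (real N)\<rceil>"
  have T: "T = 4 * D * k + 1" unfolding T_def k_def ..
  have Nk: "N \<le> l ^ k" unfolding k_def by (rule Nk_bound) (use assms in auto)
  define P where "P = protP N l k"
  have runeq: "\<And>r x. length x = N \<Longrightarrow> trop_run P r x = take r (map (ansx N l x) (qlist (ansx N l x) (topt N l k)))"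
    unfolding P_def using run_eq Qx_eq by metis
  have full: "\<And>x. length x = N \<Longrightarrow> num_finite x \<le> D \<Longrightarrow> trop_run P T x = map (ansx N l x) (qlist (ansx N l x) (topt N l k))
      \<and> (\<forall>j<N. vals (ansx N l x) (topt N l k) j = x ! j)"
  proof -
    fix x :: "enat list" assume x: "length x = N" "num_finite x \<le> D"
    have t: "(\<forall>j<N. vals (ansx N l x) (topt N l k) j = x ! j) \<and> length (qlist (ansx N l x) (topt N l k)) \<le> 1 + 4 * k * num_finite x"
      by (rule top_ok) (use assms x Nk in auto)
    have "4 * k * num_finite x \<le> 4 * D * k" using x(2) by (simp add: mult.commute mult_le_mono2)
    then have "length (qlist (ansx N l x) (topt N l k)) \<le> T" using t T by linarith
    then show "trop_run P T x = map (ansx N l x) (qlist (ansx N l x) (topt N l k)) \<and> (\<forall>j<N. vals (ansx N l x) (topt N l k) j = x ! j)"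
      using runeq[OF x(1)] t by simp
  qed
  have p1: "\<forall>x. length x = N \<longrightarrow> (\<forall>r<T. \<forall>row\<in>set (P r (trop_run P r x)). length row = N) \<and> length (trop_run P T x) \<le> T"
  proof (rule allI, rule impI)
    fix x :: "enat list" assume x: "length x = N"
    have a: "\<forall>r<T. \<forall>row\<in>set (P r (trop_run P r x)). length row = N"
      unfolding P_def using rows_mkrow by (fastforce simp: mkrow_def)
    have b: "length (trop_run P T x) \<le> T" using runeq[OF x] by simp
    show "(\<forall>r<T. \<forall>row\<in>set (P r (trop_run P r x)). length row = N) \<and> length (trop_run P T x) \<le> T"
      using a b by blast
  qed
  have p2: "\<forall>x y. length x = N \<longrightarrow> length y = N \<longrightarrow> num_finite x \<le> D \<longrightarrow> num_finite y \<le> D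
        \<longrightarrow> trop_run P T x = trop_run P T y \<longrightarrow> x = y"
  proof (intro allI impI)
    fix x y :: "enat list"
    assume h: "length x = N" "length y = N" "num_finite x \<le> D" "num_finite y \<le> D" "trop_run P T x = trop_run P T y"
    have "vals (ansx N l x) (topt N l k) = vals (ansx N l y) (topt N l k)"
      by (rule vals_cong_ans) (use full[OF h(1,3)] full[OF h(2,4)] h(5) in simp)
    then have "\<forall>j<N. x ! j = y ! j" using full[OF h(1,3)] full[OF h(2,4)] by simp
    then show "x = y" using h(1,2) by (simp add: nth_equalityI)
  qed
  have "tropical_protocol T T N D P"
    unfolding tropical_protocol_def using p1 p2 by blast
  moreover have "within_delay T N l P"
    unfolding within_delay_def P_def using rows_mkrow mkrow_ok by blast
  ultimately show ?thesis by blast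
qed

end
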